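(* For every integer $p$ and every first-order graph formula $\phi$ with free variables among $x_1,\dots,x_p$ there exists a polynomial $P_\phi\in\mathbb Z[X_{i,j}:1\le i<j\le p]$ (in $\binom p2$ variables) such that for every sequence $(G_n)_{n\in\mathbb N}$ of finite graphs that converges elementarily to the Rado graph the following holds: if $(G_n)$ is L-convergent to a graphon $W$, then $$\lim_{n\to\infty}\langle\phi,G_n\rangle=\int_{[0,1]^p}P_\phi\big((W(x_i,x_j))_{1\le i<j\le p}\big)\,\mathrm dx_1\cdots\mathrm dx_p.$$
   Context: $\langle\phi,G\rangle=|\{(v_1,\dots,v_p)\in V(G)^p:G\models\phi(v_1,\dots,v_p)\}|/|G|^p$. $(G_n)$ converges elementarily to $H$ if for every first-order sentence $\theta$, $H\models\theta$ iff $G_n\models\theta$ for all sufficiently large $n$. The Rado graph is the unique countable graph such that for all finite disjoint vertex sets $A,B$ there is a vertex outside $A\cup B$ adjacent to all of $A$ and none of $B$. A graphon is a symmetric measurable $W:[0,1]^2\to[0,1]$; $(G_n)$ is L-convergent to $W$ if for every finite graph $F$ on $\{1,\dots,k\}$, $\hom(F,G_n)/|G_n|^k\to\int_{[0,1]^k}\prod_{ij\in E(F)}W(x_i,x_j)\,\mathrm dx$. *)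

theory Defs
  imports "HOL-Analysis.Analysis"
begin

text \<open>Variables are indexed by natural numbers; x_i is variable i.\<close>
datatype fm = Eq nat nat | Adj nat nat | Neg fm | Conj fm fm | Disj fm fm
  | Ex nat fm | All nat fm

fun fv :: "fm \<Rightarrow> nat set" where
  "fv (Eq i j) = {i, j}"
| "fv (Adj i j) = {i, j}"
| "fv (Neg f) = fv f"
| "fv (Conj f g) = fv f \<union> fv g"
| "fv (Disj f g) = fv f \<union> fv g"
| "fv (Ex x f) = fv f - {x}"
| "fv (All x f) = fv f - {x}"

fun sat :: "'a set \<Rightarrow> ('a \<Rightarrow> 'a \<Rightarrow> bool) \<Rightarrow> (nat \<Rightarrow> 'a) \<Rightarrow> fm \<Rightarrow> bool" where
  "sat V E a (Eq i j) = (a i = a j)"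
| "sat V E a (Adj i j) = E (a i) (a j)"
| "sat V E a (Neg f) = (\<not> sat V E a f)"
| "sat V E a (Conj f g) = (sat V E a f \<and> sat V E a g)"
| "sat V E a (Disj f g) = (sat V E a f \<or> sat V E a g)"
| "sat V E a (Ex x f) = (\<exists>v\<in>V. sat V E (a(x := v)) f)"
| "sat V E a (All x f) = (\<forall>v\<in>V. sat V E (a(x := v)) f)"

text \<open>Truth of a sentence (assignment irrelevant).\<close>
definition models :: "'a set \<Rightarrow> ('a \<Rightarrow> 'a \<Rightarrow> bool) \<Rightarrow> fm \<Rightarrow> bool" where
  "models V E \<theta> = sat V E (\<lambda>_. undefined) \<theta>"

definition is_graph :: "'a set \<Rightarrow> ('a \<Rightarrow> 'a \<Rightarrow> bool) \<Rightarrow> bool" where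
  "is_graph V E \<longleftrightarrow> (\<forall>u\<in>V. \<forall>v\<in>V. E u v = E v u) \<and> (\<forall>v\<in>V. \<not> E v v)"

definition finite_graph :: "'a set \<Rightarrow> ('a \<Rightarrow> 'a \<Rightarrow> bool) \<Rightarrow> bool" where
  "finite_graph V E \<longleftrightarrow> finite V \<and> is_graph V E"

text \<open>The Rado graph: a countable graph (here with vertex set UNIV :: nat set)
  with the extension property; it is unique up to isomorphism.\<close>
definition is_rado :: "(nat \<Rightarrow> nat \<Rightarrow> bool) \<Rightarrow> bool" where
  "is_rado R \<longleftrightarrow> is_graph UNIV R \<and>
     (\<forall>A B. finite A \<and> finite B \<and> A \<inter> B = {} \<longrightarrow>
        (\<exists>v. v \<notin> A \<union> B \<and> (\<forall>a\<in>A. R v a) \<and> (\<forall>b\<in>B. \<not> R v b)))"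

definition elem_conv :: "(nat \<Rightarrow> 'a set \<times> ('a \<Rightarrow> 'a \<Rightarrow> bool)) \<Rightarrow> 'b set \<Rightarrow> ('b \<Rightarrow> 'b \<Rightarrow> bool) \<Rightarrow> bool" where
  "elem_conv G HV HE \<longleftrightarrow> (\<forall>\<theta>. fv \<theta> = {} \<longrightarrow>
      (models HV HE \<theta> \<longleftrightarrow> (\<forall>\<^sub>F n in sequentially. models (fst (G n)) (snd (G n)) \<theta>)))"

definition stone :: "nat \<Rightarrow> fm \<Rightarrow> 'a set \<Rightarrow> ('a \<Rightarrow> 'a \<Rightarrow> bool) \<Rightarrow> real" where
  "stone p \<phi> V E = real (card {a \<in> {1..p} \<rightarrow>\<^sub>E V. sat V E a \<phi>}) / real (card V) ^ p"

definition graphon :: "(real \<Rightarrow> real \<Rightarrow> real) \<Rightarrow> bool" where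
  "graphon W \<longleftrightarrow>
     (\<lambda>z. W (fst z) (snd z)) \<in> borel_measurable (restrict_space (lborel \<Otimes>\<^sub>M lborel) ({0..1} \<times> {0..1}))
   \<and> (\<forall>x\<in>{0..1}. \<forall>y\<in>{0..1}. W x y = W y x \<and> 0 \<le> W x y \<and> W x y \<le> 1)"

text \<open>Lebesgue measure on [0,1]^k, coordinates indexed by 1..k.\<close>
definition unit_cube :: "nat \<Rightarrow> (nat \<Rightarrow> real) measure" where
  "unit_cube k = PiM {1..k} (\<lambda>_. restrict_space lborel {0..1})"

text \<open>A finite graph F on {1..k} is given by its edge set of pairs (i,j), i<j.\<close>
definition hom_count :: "nat \<Rightarrow> (nat \<times> nat) set \<Rightarrow> 'a set \<Rightarrow> ('a \<Rightarrow> 'a \<Rightarrow> bool) \<Rightarrow> nat" where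
  "hom_count k F V E = card {f \<in> {1..k} \<rightarrow>\<^sub>E V. \<forall>(i,j)\<in>F. E (f i) (f j)}"

definition hom_density_W :: "nat \<Rightarrow> (nat \<times> nat) set \<Rightarrow> (real \<Rightarrow> real \<Rightarrow> real) \<Rightarrow> real" where
  "hom_density_W k F W = integral\<^sup>L (unit_cube k) (\<lambda>x. \<Prod>(i,j)\<in>F. W (x i) (x j))"

definition L_conv :: "(nat \<Rightarrow> 'a set \<times> ('a \<Rightarrow> 'a \<Rightarrow> bool)) \<Rightarrow> (real \<Rightarrow> real \<Rightarrow> real) \<Rightarrow> bool" where
  "L_conv G W \<longleftrightarrow> (\<forall>k F. F \<subseteq> {(i,j). 1 \<le> i \<and> i < j \<and> j \<le> k} \<longrightarrow>
      (\<lambda>n. real (hom_count k F (fst (G n)) (snd (G n))) / real (card (fst (G n))) ^ k)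
        \<longlonglongrightarrow> hom_density_W k F W)"

text \<open>Polynomial expressions with integer coefficients; every element of
  Z[X_{i,j}] is represented by such an expression.\<close>
datatype ipoly = PConst int | PVar nat nat | PAdd ipoly ipoly | PMul ipoly ipoly

fun pvars :: "ipoly \<Rightarrow> (nat \<times> nat) set" where
  "pvars (PConst c) = {}"
| "pvars (PVar i j) = {(i, j)}"
| "pvars (PAdd p q) = pvars p \<union> pvars q"
| "pvars (PMul p q) = pvars p \<union> pvars q"

fun peval :: "(nat \<Rightarrow> nat \<Rightarrow> real) \<Rightarrow> ipoly \<Rightarrow> real" where
  "peval v (PConst c) = real_of_int c"
| "peval v (PVar i j) = v i j"
| "peval v (PAdd p q) = peval v p + peval v q"
| "peval v (PMul p q) = peval v p * peval v q"

end

theory Submission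
  imports Defs "HOL-Probability.Probability"
begin


lemma sat_cong: "(\<forall>k\<in>fv \<phi>. a k = b k) \<Longrightarrow> sat V E a \<phi> = sat V E b \<phi>"
proof (induction \<phi> arbitrary: a b)
  case (Ex x f)
  have "\<And>v. sat V E (a(x:=v)) f = sat V E (b(x:=v)) f" using Ex by (intro Ex.IH) auto
  then show ?case by simp
next
  case (All x f)
  have "\<And>v. sat V E (a(x:=v)) f = sat V E (b(x:=v)) f" using All by (intro All.IH) auto
  then show ?case by simp
next
  case (Conj f g)
  have "sat V E a f = sat V E b f" using Conj by (intro Conj.IH(1)) auto
  moreover have "sat V E a g = sat V E b g" using Conj by (intro Conj.IH(2)) auto
  ultimately show ?case by simp
next
  case (Disj f g)
  have "sat V E a f = sat V E b f" using Disj by (intro Disj.IH(1)) auto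
  moreover have "sat V E a g = sat V E b g" using Disj by (intro Disj.IH(2)) auto
  ultimately show ?case by simp
qed auto

definition allc :: "nat list \<Rightarrow> fm \<Rightarrow> fm" where "allc xs \<psi> = foldr All xs \<psi>"

lemma fv_allc: "fv (allc xs \<psi>) = fv \<psi> - set xs"
  unfolding allc_def by (induction xs) auto

lemma sat_allc: "sat V E a (allc xs \<psi>) \<longleftrightarrow>
  (\<forall>b. (\<forall>k\<in>set xs. b k \<in> V) \<and> (\<forall>k. k \<notin> set xs \<longrightarrow> b k = a k) \<longrightarrow> sat V E b \<psi>)"
proof (induction xs arbitrary: a)
  case Nil
  show ?case unfolding allc_def by (simp add: fun_eq_iff[symmetric])
next
  case (Cons x xs)
  have "sat V E a (allc (x#xs) \<psi>) = (\<forall>v\<in>V. sat V E (a(x:=v)) (allc xs \<psi>))"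
    by (simp add: allc_def)
  also have "\<dots> = (\<forall>v\<in>V. \<forall>b. (\<forall>k\<in>set xs. b k \<in> V) \<and> (\<forall>k. k \<notin> set xs \<longrightarrow> b k = (a(x:=v)) k) \<longrightarrow> sat V E b \<psi>)"
    using Cons by simp
  also have "\<dots> = (\<forall>b. (\<forall>k\<in>set (x#xs). b k \<in> V) \<and> (\<forall>k. k \<notin> set (x#xs) \<longrightarrow> b k = a k) \<longrightarrow> sat V E b \<psi>)"
    (is "?L = ?R")
  proof
    assume H: ?L
    show ?R
    proof (intro allI impI)
      fix b assume b: "(\<forall>k\<in>set (x#xs). b k \<in> V) \<and> (\<forall>k. k \<notin> set (x#xs) \<longrightarrow> b k = a k)"
      have "b x \<in> V" using b by simp
      moreover have "(\<forall>k\<in>set xs. b k \<in> V) \<and> (\<forall>k. k \<notin> set xs \<longrightarrow> b k = (a(x:=b x)) k)"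
      proof (intro conjI allI impI ballI)
        fix k assume "k \<in> set xs" then show "b k \<in> V" using b by simp
      next
        fix k assume k: "k \<notin> set xs"
        show "b k = (a(x:=b x)) k"
        proof (cases "k = x")
          case True then show ?thesis by simp
        next
          case False then show ?thesis using b k by simp
        qed
      qed
      ultimately show "sat V E b \<psi>" using H by blast
    qed
  next
    assume H: ?R
    show ?L
    proof (intro ballI allI impI)
      fix v b assume "v \<in> V" "(\<forall>k\<in>set xs. b k \<in> V) \<and> (\<forall>k. k \<notin> set xs \<longrightarrow> b k = (a(x:=v)) k)"
      then have "(\<forall>k\<in>set (x#xs). b k \<in> V) \<and> (\<forall>k. k \<notin> set (x#xs) \<longrightarrow> b k = a k)"
      proof (intro conjI allI impI ballI)
        fix k assume k: "k \<in> set (x#xs)"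
        show "b k \<in> V"
        proof (cases "k \<in> set xs")
          case True then show ?thesis using \<open>(\<forall>k\<in>set xs. b k \<in> V) \<and> _\<close> by blast
        next
          case False
          then have "k = x" using k by simp
          then have "b k = v" using False \<open>_ \<and> (\<forall>k. k \<notin> set xs \<longrightarrow> b k = (a(x:=v)) k)\<close> by simp
          then show ?thesis using \<open>v \<in> V\<close> by simp
        qed
      next
        fix k assume k: "k \<notin> set (x#xs)"
        then have "k \<noteq> x" "k \<notin> set xs" by auto
        then show "b k = a k" using \<open>_ \<and> (\<forall>k. k \<notin> set xs \<longrightarrow> b k = (a(x:=v)) k)\<close> by simp
      qed
      then show "sat V E b \<psi>" using H by blast
    qed
  qed
  finally show ?case .
qed

lemma conj_ex: "finite A \<Longrightarrow> \<exists>\<psi>. fv \<psi> \<subseteq> (\<Union>x\<in>A. fv (g x)) \<and> (\<forall>(V::'v set) E a. sat V E a \<psi> = (\<forall>x\<in>A. sat V E a (g x)))"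
proof (induction A rule: finite_induct)
  case empty
  have "fv (All 0 (Eq 0 0)) = {}" by simp
  moreover have "\<forall>(V::'v set) E a. sat V E a (All 0 (Eq 0 0))" by simp
  ultimately show ?case by (intro exI[of _ "All 0 (Eq 0 0)"] conjI) simp_all
next
  case (insert x A)
  obtain \<psi> where 1: "fv \<psi> \<subseteq> (\<Union>x\<in>A. fv (g x))" and 2: "\<forall>(V::'v set) E a. sat V E a \<psi> = (\<forall>x\<in>A. sat V E a (g x))"
    using insert.IH by blast
  have "fv (Conj (g x) \<psi>) \<subseteq> (\<Union>x\<in>insert x A. fv (g x))" using 1 by auto
  moreover have "\<forall>(V::'v set) E a. sat V E a (Conj (g x) \<psi>) = (\<forall>y\<in>insert x A. sat V E a (g y))" using 2 by simp
  ultimately show ?case by (intro exI[of _ "Conj (g x) \<psi>"] conjI)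
qed

definition agree where "agree R1 R2 T a b \<longleftrightarrow> (\<forall>i\<in>T. \<forall>j\<in>T. (a i = a j \<longleftrightarrow> b i = b j) \<and> (R1 (a i) (a j) \<longleftrightarrow> R2 (b i) (b j)))"

lemma agree_sym: "agree R1 R2 T a b \<Longrightarrow> agree R2 R1 T b a" unfolding agree_def by blast

lemma agree_ext:
  assumes g1: "is_graph UNIV R1" and r2: "is_rado R2" and fin: "finite T" and ag: "agree R1 R2 T a b"
  shows "\<exists>w. agree R1 R2 (insert x T) (a(x:=v)) (b(x:=w))"
proof (cases "\<exists>y\<in>T - {x}. a y = v")
  case True
  then obtain y where y: "y \<in> T" "y \<noteq> x" "a y = v" by blast
  show ?thesis
  proof (intro exI[of _ "b y"])
    have e: "\<And>i. i \<in> insert x T \<Longrightarrow> \<exists>i'\<in>T. (a(x:=v)) i = a i' \<and> (b(x:=b y)) i = b i'"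
      using y by (metis fun_upd_other fun_upd_same insert_iff)
    show "agree R1 R2 (insert x T) (a(x := v)) (b(x := b y))"
      unfolding agree_def
    proof (intro ballI)
      fix i j assume "i \<in> insert x T" "j \<in> insert x T"
      then obtain i' j' where i': "i' \<in> T" "(a(x:=v)) i = a i'" "(b(x:=b y)) i = b i'"
        and j': "j' \<in> T" "(a(x:=v)) j = a j'" "(b(x:=b y)) j = b j'" using e by blast
      have "(a i' = a j') = (b i' = b j') \<and> R1 (a i') (a j') = R2 (b i') (b j')"
        using ag i'(1) j'(1) unfolding agree_def by blast
      then show "((a(x := v)) i = (a(x := v)) j) = ((b(x := b y)) i = (b(x := b y)) j) \<and>
           R1 ((a(x := v)) i) ((a(x := v)) j) = R2 ((b(x := b y)) i) ((b(x := b y)) j)"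
        unfolding i'(2,3) j'(2,3) .
    qed
  qed
next
  case False
  let ?T = "T - {x}"
  let ?A = "b ` {y\<in>?T. R1 v (a y)}" and ?B = "b ` {y\<in>?T. \<not> R1 v (a y)}"
  have dis: "?A \<inter> ?B = {}"
  proof (rule ccontr)
    assume "?A \<inter> ?B \<noteq> {}"
    then obtain y1 y2 where yy: "y1 \<in> T" "y2 \<in> T" "R1 v (a y1)" "\<not> R1 v (a y2)" "b y1 = b y2" by auto
    have "a y1 = a y2" using ag yy(1,2,5) unfolding agree_def by blast
    with yy(3,4) show False by simp
  qed
  have fAB: "finite ?A" "finite ?B" using fin by auto
  have ext: "\<forall>A B. finite A \<and> finite B \<and> A \<inter> B = {} \<longrightarrow>
        (\<exists>v. v \<notin> A \<union> B \<and> (\<forall>a\<in>A. R2 v a) \<and> (\<forall>b\<in>B. \<not> R2 v b))"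
    using r2 unfolding is_rado_def by (rule conjunct2)
  obtain w where w: "w \<notin> ?A \<union> ?B" "\<forall>u\<in>?A. R2 w u" "\<forall>u\<in>?B. \<not> R2 w u"
    using ext[rule_format, OF conjI[OF fAB(1) conjI[OF fAB(2) dis]]] by blast
  have g2: "is_graph UNIV R2" using r2 unfolding is_rado_def by blast
  have c1: "\<And>j. j \<in> ?T \<Longrightarrow> (v = a j \<longleftrightarrow> w = b j) \<and> (R1 v (a j) \<longleftrightarrow> R2 w (b j))"
    using False w by auto
  have c1': "\<And>j. j \<in> ?T \<Longrightarrow> (a j = v \<longleftrightarrow> b j = w) \<and> (R1 (a j) v \<longleftrightarrow> R2 (b j) w)"
  proof -
    fix j assume "j \<in> ?T"
    have s1: "R1 (a j) v = R1 v (a j)" and s2: "R2 (b j) w = R2 w (b j)"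
      using g1 g2 unfolding is_graph_def by auto
    show "(a j = v \<longleftrightarrow> b j = w) \<and> (R1 (a j) v \<longleftrightarrow> R2 (b j) w)"
      unfolding s1 s2 using c1[OF \<open>j \<in> ?T\<close>] by auto
  qed
  have c0: "R1 v v = R2 w w" using g1 g2 unfolding is_graph_def by simp
  show ?thesis
  proof (intro exI[of _ w])
    show "agree R1 R2 (insert x T) (a(x := v)) (b(x := w))"
      unfolding agree_def
    proof (intro ballI)
      fix i j assume i: "i \<in> insert x T" and j: "j \<in> insert x T"
      show "((a(x := v)) i = (a(x := v)) j) = ((b(x := w)) i = (b(x := w)) j) \<and>
           R1 ((a(x := v)) i) ((a(x := v)) j) = R2 ((b(x := w)) i) ((b(x := w)) j)"
      proof (cases "i = x")
        case True
        then show ?thesis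
        proof (cases "j = x")
          case True then show ?thesis using \<open>i = x\<close> c0 by simp
        next
          case False then show ?thesis using \<open>i = x\<close> c1[of j] j by simp
        qed
      next
        case False
        then show ?thesis
        proof (cases "j = x")
          case True then show ?thesis using \<open>i \<noteq> x\<close> c1'[of i] i by simp
        next
          case False then show ?thesis using \<open>i \<noteq> x\<close> i j ag unfolding agree_def by simp
        qed
      qed
    qed
  qed
qed

lemma rado_sat_agree:
  "is_rado R1 \<Longrightarrow> is_rado R2 \<Longrightarrow> finite T \<Longrightarrow> fv \<phi> \<subseteq> T \<Longrightarrow> agree R1 R2 T a b \<Longrightarrow>
   sat UNIV R1 a \<phi> = sat UNIV R2 b \<phi>"
proof (induction \<phi> arbitrary: T a b)
  case (Eq i j) then show ?case unfolding agree_def by auto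
next
  case (Adj i j) then show ?case unfolding agree_def by auto
next
  case (Neg f) then show ?case by auto
next
  case (Conj f g) then show ?case by auto
next
  case (Disj f g) then show ?case by auto
next
  case (Ex x f)
  have g1: "is_graph UNIV R1" and g2: "is_graph UNIV R2" using Ex.prems unfolding is_rado_def by auto
  have fvf: "fv f \<subseteq> insert x T" and fi: "finite (insert x T)" using Ex.prems by auto
  show ?case
  proof
    assume "sat UNIV R1 a (Ex x f)"
    then obtain v where v: "sat UNIV R1 (a(x:=v)) f" by auto
    obtain w where "agree R1 R2 (insert x T) (a(x:=v)) (b(x:=w))"
      using agree_ext[OF g1 Ex.prems(2,3,5)] by blast
    with Ex.IH[OF Ex.prems(1,2) fi fvf] v show "sat UNIV R2 b (Ex x f)" by auto
  next
    assume "sat UNIV R2 b (Ex x f)"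
    then obtain w where w: "sat UNIV R2 (b(x:=w)) f" by auto
    obtain v where "agree R2 R1 (insert x T) (b(x:=w)) (a(x:=v))"
      using agree_ext[OF g2 Ex.prems(1,3) agree_sym[OF Ex.prems(5)]] by blast
    then have "agree R1 R2 (insert x T) (a(x:=v)) (b(x:=w))" by (rule agree_sym)
    with Ex.IH[OF Ex.prems(1,2) fi fvf] w show "sat UNIV R1 a (Ex x f)" by auto
  qed
next
  case (All x f)
  have g1: "is_graph UNIV R1" and g2: "is_graph UNIV R2" using All.prems unfolding is_rado_def by auto
  have fvf: "fv f \<subseteq> insert x T" and fi: "finite (insert x T)" using All.prems by auto
  show ?case
  proof
    assume H: "sat UNIV R1 a (All x f)"
    show "sat UNIV R2 b (All x f)"
    proof (simp, intro allI)
      fix w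
      obtain v where "agree R2 R1 (insert x T) (b(x:=w)) (a(x:=v))"
        using agree_ext[OF g2 All.prems(1,3) agree_sym[OF All.prems(5)]] by blast
      then have "agree R1 R2 (insert x T) (a(x:=v)) (b(x:=w))" by (rule agree_sym)
      with All.IH[OF All.prems(1,2) fi fvf] H show "sat UNIV R2 (b(x:=w)) f" by auto
    qed
  next
    assume H: "sat UNIV R2 b (All x f)"
    show "sat UNIV R1 a (All x f)"
    proof (simp, intro allI)
      fix v
      obtain w where "agree R1 R2 (insert x T) (a(x:=v)) (b(x:=w))"
        using agree_ext[OF g1 All.prems(2,3,5)] by blast
      with All.IH[OF All.prems(1,2) fi fvf] H show "sat UNIV R1 (a(x:=v)) f" by auto
    qed
  qed
qed



definition Pp :: "nat \<Rightarrow> (nat \<times> nat) set" where "Pp p = {(i,j). 1 \<le> i \<and> i < j \<and> j \<le> p}"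

lemma finite_Pp: "finite (Pp p)"
proof -
  have "Pp p \<subseteq> {1..p} \<times> {1..p}" unfolding Pp_def by auto
  then show ?thesis by (rule finite_subset) simp
qed

definition pat :: "nat \<Rightarrow> ('a \<Rightarrow> 'a \<Rightarrow> bool) \<Rightarrow> (nat \<Rightarrow> 'a) \<Rightarrow> (nat \<times> nat) set" where
  "pat p Rl f = {e \<in> Pp p. Rl (f (fst e)) (f (snd e))}"

lemma pat_sub: "pat p Rl f \<subseteq> Pp p" unfolding pat_def by auto

lemma inj_Pp: "inj_on f {1..p} \<longleftrightarrow> (\<forall>e\<in>Pp p. f (fst e) \<noteq> f (snd e))"
proof
  assume "inj_on f {1..p}"
  then show "\<forall>e\<in>Pp p. f (fst e) \<noteq> f (snd e)" unfolding Pp_def inj_on_def by fastforce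
next
  assume H: "\<forall>e\<in>Pp p. f (fst e) \<noteq> f (snd e)"
  show "inj_on f {1..p}"
    unfolding inj_on_def
  proof (intro ballI impI)
    fix x y assume x: "x \<in> {1..p}" and y: "y \<in> {1..p}" and e: "f x = f y"
    show "x = y"
    proof (rule ccontr)
      assume "x \<noteq> y"
      then consider "x < y" | "y < x" by linarith
      then show False
      proof cases
        case 1 then have "(x,y) \<in> Pp p" using x y unfolding Pp_def by auto
        then show False using H e by fastforce
      next
        case 2 then have "(y,x) \<in> Pp p" using x y unfolding Pp_def by auto
        then show False using H e by fastforce
      qed
    qed
  qed
qed

definition Sset :: "nat \<Rightarrow> fm \<Rightarrow> (nat \<times> nat) set set" where
  "Sset p \<phi> = {F. \<exists>R b. is_rado R \<and> inj_on b {1..p} \<and> pat p R b = F \<and> sat UNIV R b \<phi>}"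

lemma Sset_sub: "Sset p \<phi> \<subseteq> Pow (Pp p)" unfolding Sset_def using pat_sub by blast

lemma rado_S:
  assumes R: "is_rado R" and fv: "fv \<phi> \<subseteq> {1..p}" and b: "inj_on b {1..p}"
  shows "sat UNIV R b \<phi> \<longleftrightarrow> pat p R b \<in> Sset p \<phi>"
proof
  assume "sat UNIV R b \<phi>"
  then show "pat p R b \<in> Sset p \<phi>" unfolding Sset_def using R b by blast
next
  assume "pat p R b \<in> Sset p \<phi>"
  then obtain R' b' where R': "is_rado R'" "inj_on b' {1..p}" "pat p R' b' = pat p R b" "sat UNIV R' b' \<phi>"
    unfolding Sset_def by blast
  have g: "is_graph UNIV R" "is_graph UNIV R'" using R R'(1) unfolding is_rado_def by auto
  have ag: "agree R' R {1..p} b' b"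
    unfolding agree_def
  proof (intro ballI conjI)
    fix i j assume i: "i \<in> {1..p}" and j: "j \<in> {1..p}"
    show "(b' i = b' j) = (b i = b j)"
      using inj_on_eq_iff[OF R'(2) i j] inj_on_eq_iff[OF b i j] by simp
    have key: "\<And>i j. (i,j) \<in> Pp p \<Longrightarrow> R' (b' i) (b' j) = R (b i) (b j)"
    proof -
      fix i j assume ij: "(i,j) \<in> Pp p"
      have "((i,j) \<in> pat p R' b') = ((i,j) \<in> pat p R b)" using R'(3) by simp
      then show "R' (b' i) (b' j) = R (b i) (b j)" using ij unfolding pat_def by simp
    qed
    show "R' (b' i) (b' j) = R (b i) (b j)"
    proof (cases i j rule: linorder_cases)
      case less
      then show ?thesis using key[of i j] i j unfolding Pp_def by simp
    next
      case equal
      then show ?thesis using g unfolding is_graph_def by simp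
    next
      case greater
      then have "R' (b' j) (b' i) = R (b j) (b i)" using key[of j i] i j unfolding Pp_def by simp
      moreover have "R' (b' j) (b' i) = R' (b' i) (b' j)" "R (b j) (b i) = R (b i) (b j)"
        using g unfolding is_graph_def by auto
      ultimately show ?thesis by simp
    qed
  qed
  show "sat UNIV R b \<phi>"
    using rado_sat_agree[OF R'(1) R finite_atLeastAtMost fv ag] R'(4) by simp
qed

lemma dist_fm: "\<exists>\<psi>. fv \<psi> \<subseteq> {1..p} \<and> (\<forall>(V::'v set) Rl a. sat V Rl a \<psi> = inj_on a {1..p})"
proof -
  obtain \<psi> where h1: "fv \<psi> \<subseteq> (\<Union>e\<in>Pp p. fv (Neg (Eq (fst e) (snd e))))"
    and h2: "\<forall>(V::'v set) Rl a. sat V Rl a \<psi> = (\<forall>e\<in>Pp p. sat V Rl a (Neg (Eq (fst e) (snd e))))"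
    using conj_ex[OF finite_Pp[of p], of "\<lambda>e. Neg (Eq (fst e) (snd e))"] by blast
  have "fv \<psi> \<subseteq> {1..p}" using h1 unfolding Pp_def by auto
  moreover have "\<forall>(V::'v set) Rl a. sat V Rl a \<psi> = inj_on a {1..p}" unfolding inj_Pp using h2 by simp
  ultimately show ?thesis by blast
qed

lemma pat_fm:
  assumes F: "F \<subseteq> Pp p"
  shows "\<exists>\<psi>. fv \<psi> \<subseteq> {1..p} \<and> (\<forall>(V::'v set) Rl a. sat V Rl a \<psi> = (pat p Rl a = F))"
proof -
  define g where "g = (\<lambda>e. if e \<in> F then Adj (fst e) (snd e) else Neg (Adj (fst e) (snd e)))"
  obtain \<psi> where h1: "fv \<psi> \<subseteq> (\<Union>e\<in>Pp p. fv (g e))"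
    and h2: "\<forall>(V::'v set) Rl a. sat V Rl a \<psi> = (\<forall>e\<in>Pp p. sat V Rl a (g e))"
    using conj_ex[OF finite_Pp[of p], of g] by blast
  have "\<forall>e\<in>Pp p. fv (g e) \<subseteq> {1..p}" unfolding g_def Pp_def by auto
  then have "fv \<psi> \<subseteq> {1..p}" using h1 by blast
  moreover have "\<forall>(V::'v set) Rl a. sat V Rl a \<psi> = (pat p Rl a = F)"
  proof (intro allI)
    fix V :: "'v set" and Rl a
    have "sat V Rl a \<psi> = (\<forall>e\<in>Pp p. Rl (a (fst e)) (a (snd e)) = (e \<in> F))"
      using h2 unfolding g_def by auto
    also have "\<dots> = (pat p Rl a = F)"
      unfolding pat_def using F by blast
    finally show "sat V Rl a \<psi> = (pat p Rl a = F)" .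
  qed
  ultimately show ?thesis by blast
qed

lemma models_allc: "models V Rl (allc [1..<p+1] \<psi>) \<longleftrightarrow> (\<forall>b\<in>{1..p} \<rightarrow>\<^sub>E V. sat V Rl b \<psi>)"
proof -
  have s: "set [1..<p+1] = {1..p}" by auto
  show ?thesis unfolding models_def sat_allc s by (auto simp: PiE_iff extensional_def)
qed

lemma fv_allc_p: "fv (allc [1..<p+1] \<psi>) = fv \<psi> - {1..p}"
  unfolding fv_allc by auto

lemma transfer:
  fixes G :: "nat \<Rightarrow> nat set \<times> (nat \<Rightarrow> nat \<Rightarrow> bool)"
  assumes fv\<phi>: "fv \<phi> \<subseteq> {1..p}" and R: "is_rado R" and ec: "elem_conv G (UNIV::nat set) R"
  shows "\<forall>\<^sub>F n in sequentially. \<forall>f\<in>{1..p} \<rightarrow>\<^sub>E fst (G n). inj_on f {1..p} \<longrightarrow>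
           (sat (fst (G n)) (snd (G n)) f \<phi> \<longleftrightarrow> pat p (snd (G n)) f \<in> Sset p \<phi>)"
proof -
  have one: "\<forall>\<^sub>F n in sequentially. \<forall>f\<in>{1..p} \<rightarrow>\<^sub>E fst (G n). inj_on f {1..p} \<and> pat p (snd (G n)) f = F \<longrightarrow>
           (sat (fst (G n)) (snd (G n)) f \<phi> \<longleftrightarrow> F \<in> Sset p \<phi>)" if F: "F \<subseteq> Pp p" for F
  proof -
    obtain \<psi>d where d1: "fv \<psi>d \<subseteq> {1..p}" and d2: "\<forall>(V::nat set) Rl a. sat V Rl a \<psi>d = inj_on a {1..p}"
      using dist_fm by blast
    obtain \<psi>F where f1: "fv \<psi>F \<subseteq> {1..p}" and f2: "\<forall>(V::nat set) Rl a. sat V Rl a \<psi>F = (pat p Rl a = F)"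
      using pat_fm[OF F] by blast
    define chi0 where "chi0 = (if F \<in> Sset p \<phi> then \<phi> else Neg \<phi>)"
    define \<theta> where "\<theta> = allc [1..<p+1] (Disj (Neg (Conj \<psi>d \<psi>F)) chi0)"
    have fv\<theta>: "fv \<theta> = {}" unfolding \<theta>_def fv_allc_p chi0_def using d1 f1 fv\<phi> by auto
    have "models UNIV R \<theta>" unfolding \<theta>_def models_allc
    proof (intro ballI)
      fix b assume "b \<in> {1..p} \<rightarrow>\<^sub>E (UNIV::nat set)"
      show "sat UNIV R b (Disj (Neg (Conj \<psi>d \<psi>F)) chi0)"
      proof (cases "inj_on b {1..p} \<and> pat p R b = F")
        case True
        then have "sat UNIV R b \<phi> \<longleftrightarrow> F \<in> Sset p \<phi>" using rado_S[OF R fv\<phi>] by blast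
        then show ?thesis unfolding chi0_def by simp
      next
        case False
        then show ?thesis using d2 f2 by simp
      qed
    qed
    then have "\<forall>\<^sub>F n in sequentially. models (fst (G n)) (snd (G n)) \<theta>"
      using ec fv\<theta> unfolding elem_conv_def by blast
    then show ?thesis
    proof (rule eventually_mono)
      fix n assume m: "models (fst (G n)) (snd (G n)) \<theta>"
      show "\<forall>f\<in>{1..p} \<rightarrow>\<^sub>E fst (G n). inj_on f {1..p} \<and> pat p (snd (G n)) f = F \<longrightarrow>
           (sat (fst (G n)) (snd (G n)) f \<phi> \<longleftrightarrow> F \<in> Sset p \<phi>)"
      proof (intro ballI impI)
        fix f assume f: "f \<in> {1..p} \<rightarrow>\<^sub>E fst (G n)" and h: "inj_on f {1..p} \<and> pat p (snd (G n)) f = F"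
        have "sat (fst (G n)) (snd (G n)) f (Disj (Neg (Conj \<psi>d \<psi>F)) chi0)"
          using m f unfolding \<theta>_def models_allc by blast
        then have "sat (fst (G n)) (snd (G n)) f chi0" using d2 f2 h by simp
        then show "sat (fst (G n)) (snd (G n)) f \<phi> \<longleftrightarrow> F \<in> Sset p \<phi>"
          unfolding chi0_def by (cases "F \<in> Sset p \<phi>") auto
      qed
    qed
  qed
  have "\<forall>\<^sub>F n in sequentially. \<forall>F\<in>Pow (Pp p). \<forall>f\<in>{1..p} \<rightarrow>\<^sub>E fst (G n). inj_on f {1..p} \<and> pat p (snd (G n)) f = F \<longrightarrow>
           (sat (fst (G n)) (snd (G n)) f \<phi> \<longleftrightarrow> F \<in> Sset p \<phi>)"
    using one by (intro eventually_ball_finite) (auto simp: finite_Pp)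
  then show ?thesis
  proof (rule eventually_mono)
    fix n assume H: "\<forall>F\<in>Pow (Pp p). \<forall>f\<in>{1..p} \<rightarrow>\<^sub>E fst (G n). inj_on f {1..p} \<and> pat p (snd (G n)) f = F \<longrightarrow>
           (sat (fst (G n)) (snd (G n)) f \<phi> \<longleftrightarrow> F \<in> Sset p \<phi>)"
    show "\<forall>f\<in>{1..p} \<rightarrow>\<^sub>E fst (G n). inj_on f {1..p} \<longrightarrow>
           (sat (fst (G n)) (snd (G n)) f \<phi> \<longleftrightarrow> pat p (snd (G n)) f \<in> Sset p \<phi>)"
    proof (intro ballI impI)
      fix f assume "f \<in> {1..p} \<rightarrow>\<^sub>E fst (G n)" "inj_on f {1..p}"
      moreover have "pat p (snd (G n)) f \<in> Pow (Pp p)" using pat_sub by blast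
      ultimately show "sat (fst (G n)) (snd (G n)) f \<phi> \<longleftrightarrow> pat p (snd (G n)) f \<in> Sset p \<phi>"
        using H by blast
    qed
  qed
qed

lemma card_big:
  fixes G :: "nat \<Rightarrow> nat set \<times> (nat \<Rightarrow> nat \<Rightarrow> bool)"
  assumes ec: "elem_conv G (UNIV::nat set) R" and fin: "\<forall>n. finite (fst (G n))"
  shows "\<forall>\<^sub>F n in sequentially. m \<le> card (fst (G n))"
proof -
  obtain \<psi>d where d1: "fv \<psi>d \<subseteq> {1..m}" and d2: "\<forall>(V::nat set) Rl a. sat V Rl a \<psi>d = inj_on a {1..m}"
    using dist_fm by blast
  define \<theta> where "\<theta> = Neg (allc [1..<m+1] (Neg \<psi>d))"
  have fv\<theta>: "fv \<theta> = {}" unfolding \<theta>_def fv.simps fv_allc_p using d1 by auto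
  have "models UNIV R \<theta>"
  proof -
    have "(\<lambda>k\<in>{1..m}. k) \<in> {1..m} \<rightarrow>\<^sub>E (UNIV::nat set)" by simp
    moreover have "inj_on (\<lambda>k\<in>{1..m}. k) {1..m}" by (simp add: inj_on_def)
    moreover have "\<And>b. inj_on b {1..m} \<Longrightarrow> \<not> sat UNIV R b (Neg \<psi>d)" using d2 by simp
    ultimately have "\<not> (\<forall>b\<in>{1..m} \<rightarrow>\<^sub>E (UNIV::nat set). sat UNIV R b (Neg \<psi>d))" by blast
    then show ?thesis unfolding \<theta>_def models_def sat.simps(3) models_allc[unfolded models_def] .
  qed
  then have "\<forall>\<^sub>F n in sequentially. models (fst (G n)) (snd (G n)) \<theta>"
    using ec fv\<theta> unfolding elem_conv_def by blast
  then show ?thesis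
  proof (rule eventually_mono)
    fix n assume "models (fst (G n)) (snd (G n)) \<theta>"
    then have "\<not> (\<forall>b\<in>{1..m} \<rightarrow>\<^sub>E fst (G n). sat (fst (G n)) (snd (G n)) b (Neg \<psi>d))"
      unfolding \<theta>_def models_def sat.simps(3) models_allc[unfolded models_def] .
    then obtain b where b: "b \<in> {1..m} \<rightarrow>\<^sub>E fst (G n)" "inj_on b {1..m}" using d2 by auto
    have "m = card (b ` {1..m})" using card_image[OF b(2)] by simp
    also have "\<dots> \<le> card (fst (G n))" using b(1) fin by (intro card_mono) auto
    finally show "m \<le> card (fst (G n))" .
  qed
qed



definition Q :: "(nat \<times> nat) set \<Rightarrow> (nat \<times> nat) set \<Rightarrow> ((nat \<times> nat) \<Rightarrow> real) \<Rightarrow> real" where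
  "Q D F v = (\<Prod>e\<in>F. v e) * (\<Prod>e\<in>D - F. 1 - v e)"

lemma Q_expand:
  assumes D: "finite D" and F: "F \<subseteq> D"
  shows "Q D F v = (\<Sum>T\<in>Pow (D - F). (-1) ^ card T * (\<Prod>e\<in>F \<union> T. v e))"
proof -
  have fD: "finite (D - F)" using D by simp
  have "(\<Prod>e\<in>D - F. 1 - v e) = (\<Prod>e\<in>D - F. (- v e) + 1)" by simp
  also have "\<dots> = (\<Sum>T\<in>Pow (D - F). (\<Prod>e\<in>T. - v e) * (\<Prod>e\<in>(D - F) - T. 1))"
    by (rule prod_add[OF fD])
  also have "\<dots> = (\<Sum>T\<in>Pow (D - F). (-1) ^ card T * (\<Prod>e\<in>T. v e))"
    by (simp add: prod_uminus)
  finally have 1: "(\<Prod>e\<in>D - F. 1 - v e) = (\<Sum>T\<in>Pow (D - F). (-1) ^ card T * (\<Prod>e\<in>T. v e))" .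
  have 2: "(\<Prod>e\<in>F. v e) * (\<Prod>e\<in>T. v e) = (\<Prod>e\<in>F \<union> T. v e)" if T: "T \<in> Pow (D - F)" for T
  proof -
    have "finite F" using D F by (rule finite_subset[rotated])
    moreover have "finite T" using T D by (intro finite_subset[of T D]) auto
    moreover have "F \<inter> T = {}" using T by auto
    ultimately
    show ?thesis by (simp add: prod.union_disjoint)
  qed
  have "Q D F v = (\<Sum>T\<in>Pow (D - F). (-1) ^ card T * ((\<Prod>e\<in>F. v e) * (\<Prod>e\<in>T. v e)))"
    unfolding Q_def 1 sum_distrib_left by (simp add: algebra_simps)
  also have "\<dots> = (\<Sum>T\<in>Pow (D - F). (-1) ^ card T * (\<Prod>e\<in>F \<union> T. v e))"
    using 2 by (intro sum.cong) auto
  finally show ?thesis .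
qed

lemma prod01: "finite A \<Longrightarrow> (\<Prod>e\<in>A. if P e then 1 else (0::real)) = (if \<forall>e\<in>A. P e then 1 else 0)"
  by (induction rule: finite_induct) auto

lemma Q_01:
  assumes D: "finite D" and F: "F \<subseteq> D"
  shows "Q D F (\<lambda>e. if P e then 1 else 0) = (if {e\<in>D. P e} = F then 1 else 0)"
proof -
  have fF: "finite F" using D F finite_subset by auto
  have "(\<Prod>e\<in>D - F. 1 - (if P e then 1 else (0::real))) = (\<Prod>e\<in>D - F. if \<not> P e then 1 else 0)"
    by (intro prod.cong) auto
  also have "\<dots> = (if \<forall>e\<in>D - F. \<not> P e then 1 else 0)" using D by (simp add: prod01)
  finally have 1: "(\<Prod>e\<in>D - F. 1 - (if P e then 1 else (0::real))) = (if \<forall>e\<in>D - F. \<not> P e then 1 else 0)" .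
  have 2: "(\<Prod>e\<in>F. if P e then 1 else (0::real)) = (if \<forall>e\<in>F. P e then 1 else 0)" using fF by (simp add: prod01)
  have 3: "((\<forall>e\<in>F. P e) \<and> (\<forall>e\<in>D - F. \<not> P e)) = ({e\<in>D. P e} = F)" using F by blast
  show ?thesis unfolding Q_def 1 2 using 3 by auto
qed

definition ind :: "('a \<Rightarrow> 'a \<Rightarrow> bool) \<Rightarrow> (nat \<Rightarrow> 'a) \<Rightarrow> (nat \<times> nat) \<Rightarrow> real" where
  "ind Rl f = (\<lambda>e. if Rl (f (fst e)) (f (snd e)) then 1 else 0)"

lemma sum_ind: "finite A \<Longrightarrow> (\<Sum>x\<in>A. if P x then 1 else (0::real)) = real (card {x\<in>A. P x})"
  by (simp add: sum.inter_filter[symmetric])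

lemma hom_count_sum:
  assumes V: "finite V" and H: "finite H"
  shows "(\<Sum>f\<in>{1..p} \<rightarrow>\<^sub>E V. \<Prod>e\<in>H. ind Rl f e) = real (hom_count p H V Rl)"
proof -
  have fA: "finite ({1..p} \<rightarrow>\<^sub>E V)" using V by (simp add: finite_PiE)
  have "(\<Sum>f\<in>{1..p} \<rightarrow>\<^sub>E V. \<Prod>e\<in>H. ind Rl f e) =
        (\<Sum>f\<in>{1..p} \<rightarrow>\<^sub>E V. if \<forall>e\<in>H. Rl (f (fst e)) (f (snd e)) then 1 else 0)"
    unfolding ind_def using H by (simp add: prod01)
  also have "\<dots> = real (card {f\<in>{1..p} \<rightarrow>\<^sub>E V. \<forall>e\<in>H. Rl (f (fst e)) (f (snd e))})"
    using fA by (rule sum_ind)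
  also have "{f\<in>{1..p} \<rightarrow>\<^sub>E V. \<forall>e\<in>H. Rl (f (fst e)) (f (snd e))} = {f\<in>{1..p} \<rightarrow>\<^sub>E V. \<forall>(i,j)\<in>H. Rl (f i) (f j)}"
    by (auto simp: split_beta)
  finally show ?thesis unfolding hom_count_def .
qed

lemma card_pat:
  assumes V: "finite V" and F: "F \<subseteq> Pp p"
  shows "real (card {f\<in>{1..p} \<rightarrow>\<^sub>E V. pat p Rl f = F}) =
         (\<Sum>T\<in>Pow (Pp p - F). (-1) ^ card T * real (hom_count p (F \<union> T) V Rl))"
proof -
  let ?A = "{1..p} \<rightarrow>\<^sub>E V"
  have fA: "finite ?A" using V by (simp add: finite_PiE)
  have "real (card {f\<in>?A. pat p Rl f = F}) = (\<Sum>f\<in>?A. if pat p Rl f = F then 1 else 0)"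
    using sum_ind[OF fA] by simp
  also have "\<dots> = (\<Sum>f\<in>?A. Q (Pp p) F (ind Rl f))"
  proof (intro sum.cong refl)
    fix f
    have "Q (Pp p) F (ind Rl f) = (if {e\<in>Pp p. Rl (f (fst e)) (f (snd e))} = F then 1 else 0)"
      unfolding ind_def by (rule Q_01[OF finite_Pp F])
    then show "(if pat p Rl f = F then 1 else 0) = Q (Pp p) F (ind Rl f)" unfolding pat_def by simp
  qed
  also have "\<dots> = (\<Sum>f\<in>?A. \<Sum>T\<in>Pow (Pp p - F). (-1) ^ card T * (\<Prod>e\<in>F \<union> T. ind Rl f e))"
    by (simp add: Q_expand[OF finite_Pp F])
  also have "\<dots> = (\<Sum>T\<in>Pow (Pp p - F). \<Sum>f\<in>?A. (-1) ^ card T * (\<Prod>e\<in>F \<union> T. ind Rl f e))"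
    by (rule sum.swap)
  also have "\<dots> = (\<Sum>T\<in>Pow (Pp p - F). (-1) ^ card T * real (hom_count p (F \<union> T) V Rl))"
  proof (intro sum.cong refl)
    fix T assume T: "T \<in> Pow (Pp p - F)"
    have fin: "finite (F \<union> T)" using T F finite_Pp finite_subset by blast
    show "(\<Sum>f\<in>?A. (-1) ^ card T * (\<Prod>e\<in>F \<union> T. ind Rl f e)) = (-1) ^ card T * real (hom_count p (F \<union> T) V Rl)"
      using hom_count_sum[OF V fin, where p=p and Rl=Rl] by (simp add: sum_distrib_left[symmetric])
  qed
  finally show ?thesis .
qed

lemma poly_sum: "finite A \<Longrightarrow> (\<forall>a\<in>A. pvars (g a) \<subseteq> X) \<Longrightarrow>
  \<exists>P. pvars P \<subseteq> X \<and> (\<forall>v. peval v P = (\<Sum>a\<in>A. peval v (g a)))"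
proof (induction A rule: finite_induct)
  case empty
  show ?case by (intro exI[of _ "PConst 0"]) simp
next
  case (insert x A)
  obtain P where 1: "pvars P \<subseteq> X" and 2: "\<forall>v. peval v P = (\<Sum>a\<in>A. peval v (g a))"
    using insert by blast
  show ?case using 1 2 insert by (intro exI[of _ "PAdd (g x) P"]) simp
qed

lemma poly_prod: "finite A \<Longrightarrow> (\<forall>a\<in>A. pvars (g a) \<subseteq> X) \<Longrightarrow>
  \<exists>P. pvars P \<subseteq> X \<and> (\<forall>v. peval v P = (\<Prod>a\<in>A. peval v (g a)))"
proof (induction A rule: finite_induct)
  case empty
  show ?case by (intro exI[of _ "PConst 1"]) simp
next
  case (insert x A)
  obtain P where 1: "pvars P \<subseteq> X" and 2: "\<forall>v. peval v P = (\<Prod>a\<in>A. peval v (g a))"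
    using insert by blast
  show ?case using 1 2 insert by (intro exI[of _ "PMul (g x) P"]) simp
qed

lemma poly_Q:
  assumes F: "F \<subseteq> Pp p"
  shows "\<exists>P. pvars P \<subseteq> Pp p \<and> (\<forall>v. peval v P = Q (Pp p) F (\<lambda>e. v (fst e) (snd e)))"
proof -
  have fF: "finite F" using F finite_Pp finite_subset by blast
  obtain P1 where a1: "pvars P1 \<subseteq> Pp p" and a2: "\<forall>v. peval v P1 = (\<Prod>e\<in>F. peval v (PVar (fst e) (snd e)))"
    using poly_prod[OF fF, of "\<lambda>e. PVar (fst e) (snd e)" "Pp p"] F by auto
  obtain P2 where b1: "pvars P2 \<subseteq> Pp p" and
    b2: "\<forall>v. peval v P2 = (\<Prod>e\<in>Pp p - F. peval v (PAdd (PConst 1) (PMul (PConst (-1)) (PVar (fst e) (snd e)))))"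
    using poly_prod[of "Pp p - F" "\<lambda>e. PAdd (PConst 1) (PMul (PConst (-1)) (PVar (fst e) (snd e)))" "Pp p"] finite_Pp
    by auto
  have "pvars (PMul P1 P2) \<subseteq> Pp p" using a1 b1 by simp
  moreover have "\<forall>v. peval v (PMul P1 P2) = Q (Pp p) F (\<lambda>e. v (fst e) (snd e))"
    using a2 b2 unfolding Q_def by simp
  ultimately show ?thesis by blast
qed



lemma prob_unit: "prob_space (restrict_space lborel {0..1::real})"
  by (rule prob_spaceI) (simp add: space_restrict_space emeasure_restrict_space)

lemma prob_uc: "prob_space (unit_cube p)"
  unfolding unit_cube_def by (rule prob_space_PiM) (rule prob_unit)

lemma space_uc: "space (unit_cube p) = {1..p} \<rightarrow>\<^sub>E {0..1}"
  unfolding unit_cube_def by (simp add: space_PiM space_restrict_space)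

lemma meas_W:
  assumes W: "graphon W" and i: "i \<in> {1..p}" and j: "j \<in> {1..p}"
  shows "(\<lambda>x. W (x i) (x j)) \<in> borel_measurable (unit_cube p)"
proof -
  have m: "(\<lambda>z. W (fst z) (snd z)) \<in> borel_measurable (restrict_space (lborel \<Otimes>\<^sub>M lborel) ({0..1} \<times> {0..1}))"
    using W unfolding graphon_def by blast
  have ci: "(\<lambda>x. x k) \<in> unit_cube p \<rightarrow>\<^sub>M lborel" if k: "k \<in> {1..p}" for k
  proof -
    have "(\<lambda>x. x k) \<in> unit_cube p \<rightarrow>\<^sub>M restrict_space lborel {0..1::real}"
      unfolding unit_cube_def by (rule measurable_component_singleton) (use k in simp)
    moreover have "(\<lambda>y. y) \<in> restrict_space lborel {0..1::real} \<rightarrow>\<^sub>M lborel"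
      by (rule measurable_restrict_space1) simp
    ultimately show ?thesis by (rule measurable_comp[where f="\<lambda>x. x k" and g="\<lambda>y. y", unfolded o_def])
  qed
  have g: "(\<lambda>x. (x i, x j)) \<in> unit_cube p \<rightarrow>\<^sub>M restrict_space (lborel \<Otimes>\<^sub>M lborel) ({0..1} \<times> {0..1})"
  proof (rule measurable_restrict_space2)
    show "(\<lambda>x. (x i, x j)) \<in> space (unit_cube p) \<rightarrow> {0..1} \<times> {0..1}"
      using i j unfolding space_uc by (auto simp: PiE_iff)
    show "(\<lambda>x. (x i, x j)) \<in> unit_cube p \<rightarrow>\<^sub>M lborel \<Otimes>\<^sub>M lborel"
      using ci[OF i] ci[OF j] by (rule measurable_Pair)
  qed
  from measurable_comp[OF g m] show ?thesis by (simp add: o_def)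
qed

lemma integrable_prodW:
  assumes W: "graphon W" and H: "H \<subseteq> Pp p"
  shows "integrable (unit_cube p) (\<lambda>x. \<Prod>e\<in>H. W (x (fst e)) (x (snd e)))"
proof -
  interpret prob_space "unit_cube p" by (rule prob_uc)
  have sub: "\<And>e. e \<in> H \<Longrightarrow> fst e \<in> {1..p} \<and> snd e \<in> {1..p}" using H unfolding Pp_def by auto
  show ?thesis
  proof (rule integrable_const_bound[where B=1])
    show "AE x in unit_cube p. norm (\<Prod>e\<in>H. W (x (fst e)) (x (snd e))) \<le> 1"
    proof (rule AE_I2)
      fix x assume x: "x \<in> space (unit_cube p)"
      have b: "0 \<le> W (x (fst e)) (x (snd e)) \<and> W (x (fst e)) (x (snd e)) \<le> 1" if e: "e \<in> H" for e
      proof -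
        have "x (fst e) \<in> {0..1}" "x (snd e) \<in> {0..1}" using x sub[OF e] unfolding space_uc by auto
        then show ?thesis using W unfolding graphon_def by blast
      qed
      have "0 \<le> (\<Prod>e\<in>H. W (x (fst e)) (x (snd e)))" using b by (intro prod_nonneg) auto
      moreover have "(\<Prod>e\<in>H. W (x (fst e)) (x (snd e))) \<le> 1" using b by (intro prod_le_1) auto
      ultimately show "norm (\<Prod>e\<in>H. W (x (fst e)) (x (snd e))) \<le> 1" by simp
    qed
    show "(\<lambda>x. \<Prod>e\<in>H. W (x (fst e)) (x (snd e))) \<in> borel_measurable (unit_cube p)"
      using sub by (intro borel_measurable_prod meas_W[OF W]) auto
  qed
qed

lemma hd_eq: "hom_density_W p H W = (\<integral>x. (\<Prod>e\<in>H. W (x (fst e)) (x (snd e))) \<partial>unit_cube p)"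
  unfolding hom_density_W_def by (simp add: case_prod_beta)

lemma integral_L:
  assumes W: "graphon W" and S: "S \<subseteq> Pow (Pp p)"
  shows "(\<integral>x. (\<Sum>F\<in>S. Q (Pp p) F (\<lambda>e. W (x (fst e)) (x (snd e)))) \<partial>unit_cube p) =
         (\<Sum>F\<in>S. \<Sum>T\<in>Pow (Pp p - F). (-1) ^ card T * hom_density_W p (F \<union> T) W)"
proof -
  let ?f = "\<lambda>H x. \<Prod>e\<in>H. W (x (fst e)) (x (snd e))"
  have int: "integrable (unit_cube p) (?f (F \<union> T))" if "F \<in> S" "T \<in> Pow (Pp p - F)" for F T
    using that S by (intro integrable_prodW[OF W]) auto
  have "(\<integral>x. (\<Sum>F\<in>S. Q (Pp p) F (\<lambda>e. W (x (fst e)) (x (snd e)))) \<partial>unit_cube p) =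
        (\<integral>x. (\<Sum>F\<in>S. \<Sum>T\<in>Pow (Pp p - F). (-1) ^ card T * ?f (F \<union> T) x) \<partial>unit_cube p)"
  proof (intro Bochner_Integration.integral_cong refl sum.cong)
    fix x F assume "F \<in> S"
    then have "F \<subseteq> Pp p" using S by auto
    then show "Q (Pp p) F (\<lambda>e. W (x (fst e)) (x (snd e))) = (\<Sum>T\<in>Pow (Pp p - F). (-1) ^ card T * ?f (F \<union> T) x)"
      by (rule Q_expand[OF finite_Pp])
  qed
  also have "\<dots> = (\<Sum>F\<in>S. (\<integral>x. (\<Sum>T\<in>Pow (Pp p - F). (-1) ^ card T * ?f (F \<union> T) x) \<partial>unit_cube p))"
    by (rule Bochner_Integration.integral_sum) (use int in auto)
  also have "\<dots> = (\<Sum>F\<in>S. \<Sum>T\<in>Pow (Pp p - F). (\<integral>x. (-1) ^ card T * ?f (F \<union> T) x \<partial>unit_cube p))"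
  proof (intro sum.cong refl)
    fix F assume F: "F \<in> S"
    show "(\<integral>x. (\<Sum>T\<in>Pow (Pp p - F). (-1) ^ card T * ?f (F \<union> T) x) \<partial>unit_cube p) =
          (\<Sum>T\<in>Pow (Pp p - F). (\<integral>x. (-1) ^ card T * ?f (F \<union> T) x \<partial>unit_cube p))"
      by (rule Bochner_Integration.integral_sum) (use int F in auto)
  qed
  also have "\<dots> = (\<Sum>F\<in>S. \<Sum>T\<in>Pow (Pp p - F). (-1) ^ card T * hom_density_W p (F \<union> T) W)"
    by (simp add: hd_eq)
  finally show ?thesis .
qed

lemma NI_bound:
  assumes V: "finite V"
  shows "card {f\<in>{1..p} \<rightarrow>\<^sub>E V. \<not> inj_on f {1..p}} \<le> card (Pp p) * card V ^ (p - 1)"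
proof -
  let ?A = "{1..p} \<rightarrow>\<^sub>E V"
  have one: "card {f\<in>?A. f (fst e) = f (snd e)} \<le> card V ^ (p - 1)" if e: "e \<in> Pp p" for e
  proof -
    obtain i j where ij: "e = (i,j)" "1 \<le> i" "i < j" "j \<le> p" using e unfolding Pp_def by auto
    have "{f\<in>?A. f (fst e) = f (snd e)} \<subseteq> (\<lambda>g. g(j := g i)) ` (({1..p} - {j}) \<rightarrow>\<^sub>E V)"
    proof
      fix f assume f: "f \<in> {f\<in>?A. f (fst e) = f (snd e)}"
      then have fA: "f \<in> ?A" and fij: "f i = f j" using ij by auto
      have "f(j := undefined) \<in> ({1..p} - {j}) \<rightarrow>\<^sub>E V" using fA by (auto simp: PiE_iff extensional_def)
      moreover have "f = (f(j := undefined))(j := (f(j := undefined)) i)" using fij ij by (auto simp: fun_eq_iff)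
      ultimately show "f \<in> (\<lambda>g. g(j := g i)) ` (({1..p} - {j}) \<rightarrow>\<^sub>E V)" by blast
    qed
    then have "card {f\<in>?A. f (fst e) = f (snd e)} \<le> card ((\<lambda>g. g(j := g i)) ` (({1..p} - {j}) \<rightarrow>\<^sub>E V))"
      using V by (intro card_mono finite_imageI finite_PiE) auto
    also have "\<dots> \<le> card (({1..p} - {j}) \<rightarrow>\<^sub>E V)" by (rule card_image_le) (use V in \<open>simp add: finite_PiE\<close>)
    also have "\<dots> = card V ^ (p - 1)" using ij by (simp add: card_PiE)
    finally show ?thesis .
  qed
  have "{f\<in>?A. \<not> inj_on f {1..p}} \<subseteq> (\<Union>e\<in>Pp p. {f\<in>?A. f (fst e) = f (snd e)})"
    using inj_Pp by blast
  then have "card {f\<in>?A. \<not> inj_on f {1..p}} \<le> card (\<Union>e\<in>Pp p. {f\<in>?A. f (fst e) = f (snd e)})"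
    using V finite_Pp by (intro card_mono) (auto simp: finite_PiE)
  also have "\<dots> \<le> (\<Sum>e\<in>Pp p. card {f\<in>?A. f (fst e) = f (snd e)})" by (rule card_UN_le[OF finite_Pp])
  also have "\<dots> \<le> (\<Sum>e\<in>Pp p. card V ^ (p - 1))" using one by (rule sum_mono)
  also have "\<dots> = card (Pp p) * card V ^ (p - 1)" by simp
  finally show ?thesis .
qed



lemma err_bound:
  assumes V: "finite V" and N1: "1 \<le> card V"
    and H: "\<forall>f\<in>{1..p} \<rightarrow>\<^sub>E V. inj_on f {1..p} \<longrightarrow> (sat V Rl f \<phi> \<longleftrightarrow> pat p Rl f \<in> S)"
  shows "\<bar>stone p \<phi> V Rl - real (card {f\<in>{1..p} \<rightarrow>\<^sub>E V. pat p Rl f \<in> S}) / real (card V) ^ p\<bar>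
         \<le> real (card (Pp p)) / real (card V)"
proof -
  let ?A = "{1..p} \<rightarrow>\<^sub>E V"
  define X where "X = {f\<in>?A. sat V Rl f \<phi>}"
  define Y where "Y = {f\<in>?A. pat p Rl f \<in> S}"
  define NI where "NI = {f\<in>?A. \<not> inj_on f {1..p}}"
  have fA: "finite ?A" using V by (simp add: finite_PiE)
  have fin: "finite X" "finite Y" "finite NI" unfolding X_def Y_def NI_def using fA by auto
  have XY: "X - NI = Y - NI" unfolding X_def Y_def NI_def using H by blast
  have c1: "card X \<le> card Y + card NI"
  proof -
    have "X \<subseteq> (Y - NI) \<union> NI" using XY by blast
    then have "card X \<le> card ((Y - NI) \<union> NI)" using fin by (intro card_mono) auto
    also have "\<dots> \<le> card (Y - NI) + card NI" by (rule card_Un_le)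
    also have "\<dots> \<le> card Y + card NI" using fin by (simp add: card_mono)
    finally show ?thesis .
  qed
  have c2: "card Y \<le> card X + card NI"
  proof -
    have "Y \<subseteq> (X - NI) \<union> NI" using XY by blast
    then have "card Y \<le> card ((X - NI) \<union> NI)" using fin by (intro card_mono) auto
    also have "\<dots> \<le> card (X - NI) + card NI" by (rule card_Un_le)
    also have "\<dots> \<le> card X + card NI" using fin by (simp add: card_mono)
    finally show ?thesis .
  qed
  have d: "\<bar>real (card X) - real (card Y)\<bar> \<le> real (card NI)" using c1 c2 by linarith
  have NIb: "card NI \<le> card (Pp p) * card V ^ (p - 1)" unfolding NI_def by (rule NI_bound[OF V])
  let ?N = "real (card V)"
  have Npos: "?N > 0" using N1 by simp
  have "stone p \<phi> V Rl - real (card Y) / ?N ^ p = (real (card X) - real (card Y)) / ?N ^ p"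
    unfolding stone_def X_def by (simp add: diff_divide_distrib)
  then have "\<bar>stone p \<phi> V Rl - real (card Y) / ?N ^ p\<bar> = \<bar>real (card X) - real (card Y)\<bar> / ?N ^ p"
    using Npos by simp
  also have "\<dots> \<le> real (card NI) / ?N ^ p" using d Npos by (simp add: divide_right_mono)
  also have "\<dots> \<le> real (card (Pp p)) / ?N"
  proof (cases "p = 0")
    case True
    then have "Pp p = {}" unfolding Pp_def by auto
    then have "card NI = 0" using NIb by simp
    then show ?thesis using True by simp
  next
    case False
    have "real (card NI) \<le> real (card (Pp p) * card V ^ (p - 1))"
      using NIb by (simp only: of_nat_le_iff)
    then have a: "real (card NI) \<le> real (card (Pp p)) * ?N ^ (p - 1)" by simp
    have b: "?N ^ p = ?N ^ (p - 1) * ?N" using False by (cases p) (simp_all add: power_Suc2)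
    have "real (card NI) / ?N ^ p \<le> real (card (Pp p)) * ?N ^ (p - 1) / ?N ^ p"
      by (rule divide_right_mono[OF a]) (use Npos in simp)
    also have "\<dots> = real (card (Pp p)) * ?N ^ (p - 1) / (?N ^ (p - 1) * ?N)" by (simp only: b)
    also have "\<dots> = real (card (Pp p)) / ?N" using Npos by simp
    finally show ?thesis .
  qed
  finally show ?thesis unfolding Y_def .
qed

theorem theorem5p15:
  fixes p :: nat and \<phi> :: fm
  assumes "fv \<phi> \<subseteq> {1..p}"
  shows "\<exists>P. pvars P \<subseteq> {(i,j). 1 \<le> i \<and> i < j \<and> j \<le> p} \<and>
    (\<forall>(G :: nat \<Rightarrow> nat set \<times> (nat \<Rightarrow> nat \<Rightarrow> bool)) (R :: nat \<Rightarrow> nat \<Rightarrow> bool) W.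
       (\<forall>n. finite_graph (fst (G n)) (snd (G n))) \<longrightarrow> is_rado R \<longrightarrow>
       elem_conv G (UNIV :: nat set) R \<longrightarrow> graphon W \<longrightarrow> L_conv G W \<longrightarrow>
       (\<lambda>n. stone p \<phi> (fst (G n)) (snd (G n)))
         \<longlonglongrightarrow> integral\<^sup>L (unit_cube p) (\<lambda>x. peval (\<lambda>i j. W (x i) (x j)) P))"
proof -
  define S where "S = Sset p \<phi>"
  have SP: "S \<subseteq> Pow (Pp p)" unfolding S_def by (rule Sset_sub)
  have fS: "finite S" using finite_subset[OF SP] finite_Pp by simp
  have "\<forall>F\<in>S. \<exists>P. pvars P \<subseteq> Pp p \<and> (\<forall>v. peval v P = Q (Pp p) F (\<lambda>e. v (fst e) (snd e)))"
  proof
    fix F assume "F \<in> S"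
    then have "F \<subseteq> Pp p" using SP by auto
    then show "\<exists>P. pvars P \<subseteq> Pp p \<and> (\<forall>v. peval v P = Q (Pp p) F (\<lambda>e. v (fst e) (snd e)))"
      by (rule poly_Q)
  qed
  from bchoice[OF this] obtain Pq where
    Pq: "\<forall>F\<in>S. pvars (Pq F) \<subseteq> Pp p \<and> (\<forall>v. peval v (Pq F) = Q (Pp p) F (\<lambda>e. v (fst e) (snd e)))"
    by (elim exE)
  have "\<forall>F\<in>S. pvars (Pq F) \<subseteq> Pp p" using Pq by simp
  from poly_sum[OF fS this] obtain P where P1: "pvars P \<subseteq> Pp p" and P2: "\<forall>v. peval v P = (\<Sum>F\<in>S. peval v (Pq F))"
    by (elim exE conjE)
  define L where "L = (\<lambda>h. \<Sum>F\<in>S. \<Sum>T\<in>Pow (Pp p - F). (-1) ^ card T * h (F \<union> T) :: real)"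
  show ?thesis
  proof (intro exI[of _ P] conjI allI impI)
    show "pvars P \<subseteq> {(i,j). 1 \<le> i \<and> i < j \<and> j \<le> p}" using P1 unfolding Pp_def .
  next
    fix G :: "nat \<Rightarrow> nat set \<times> (nat \<Rightarrow> nat \<Rightarrow> bool)" and R :: "nat \<Rightarrow> nat \<Rightarrow> bool" and W
    assume fg: "\<forall>n. finite_graph (fst (G n)) (snd (G n))" and R: "is_rado R"
      and ec: "elem_conv G (UNIV :: nat set) R" and W: "graphon W" and lc: "L_conv G W"
    have fV: "\<And>n. finite (fst (G n))" using fg unfolding finite_graph_def by blast
    have int: "integral\<^sup>L (unit_cube p) (\<lambda>x. peval (\<lambda>i j. W (x i) (x j)) P) = L (\<lambda>H. hom_density_W p H W)"
    proof -
      have "(\<lambda>x. peval (\<lambda>i j. W (x i) (x j)) P) = (\<lambda>x. \<Sum>F\<in>S. Q (Pp p) F (\<lambda>e. W (x (fst e)) (x (snd e))))"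
        using P2 Pq by (simp add: fun_eq_iff)
      then show ?thesis unfolding L_def using integral_L[OF W SP] by simp
    qed
    define Y where "Y = (\<lambda>n. {f\<in>{1..p} \<rightarrow>\<^sub>E fst (G n). pat p (snd (G n)) f \<in> S})"
    have seq: "real (card (Y n)) / real (card (fst (G n))) ^ p =
        L (\<lambda>H. real (hom_count p H (fst (G n)) (snd (G n))) / real (card (fst (G n))) ^ p)" for n
    proof -
      let ?A = "{1..p} \<rightarrow>\<^sub>E fst (G n)"
      have fA: "finite ?A" using fV by (simp add: finite_PiE)
      have "real (card (Y n)) = (\<Sum>f\<in>?A. if pat p (snd (G n)) f \<in> S then 1 else 0)"
        unfolding Y_def using sum_ind[OF fA] by simp
      also have "\<dots> = (\<Sum>f\<in>?A. \<Sum>F\<in>S. if pat p (snd (G n)) f = F then 1 else 0)"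
        using fS by simp
      also have "\<dots> = (\<Sum>F\<in>S. \<Sum>f\<in>?A. if pat p (snd (G n)) f = F then 1 else 0)"
        by (rule sum.swap)
      also have "\<dots> = (\<Sum>F\<in>S. real (card {f\<in>?A. pat p (snd (G n)) f = F}))"
        using sum_ind[OF fA] by simp
      also have "\<dots> = L (\<lambda>H. real (hom_count p H (fst (G n)) (snd (G n))))"
        unfolding L_def using card_pat[OF fV] SP by (intro sum.cong) auto
      finally show ?thesis unfolding L_def by (simp add: sum_divide_distrib)
    qed
    have Lc: "(\<lambda>n. L (\<lambda>H. real (hom_count p H (fst (G n)) (snd (G n))) / real (card (fst (G n))) ^ p))
              \<longlonglongrightarrow> L (\<lambda>H. hom_density_W p H W)"
      unfolding L_def
    proof (intro tendsto_sum tendsto_mult_left)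
      fix F T assume F: "F \<in> S" and T: "T \<in> Pow (Pp p - F)"
      have "F \<union> T \<subseteq> {(i,j). 1 \<le> i \<and> i < j \<and> j \<le> p}" using F T SP unfolding Pp_def by auto
      then show "(\<lambda>n. real (hom_count p (F \<union> T) (fst (G n)) (snd (G n))) / real (card (fst (G n))) ^ p)
                 \<longlonglongrightarrow> hom_density_W p (F \<union> T) W"
        using lc unfolding L_conv_def by blast
    qed
    have Ninf: "filterlim (\<lambda>n. real (card (fst (G n)))) at_top sequentially"
      unfolding filterlim_at_top
    proof
      fix Z :: real
      have "\<forall>\<^sub>F n in sequentially. nat \<lceil>Z\<rceil> \<le> card (fst (G n))" using card_big[OF ec] fV by blast
      then show "\<forall>\<^sub>F n in sequentially. Z \<le> real (card (fst (G n)))"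
      proof (rule eventually_mono)
        fix n assume "nat \<lceil>Z\<rceil> \<le> card (fst (G n))"
        then have "real (nat \<lceil>Z\<rceil>) \<le> real (card (fst (G n)))" by simp
        with real_nat_ceiling_ge[of Z] show "Z \<le> real (card (fst (G n)))" by linarith
      qed
    qed
    have g0: "(\<lambda>n. real (card (Pp p)) / real (card (fst (G n)))) \<longlonglongrightarrow> 0"
      by (rule tendsto_divide_0[OF tendsto_const filterlim_at_top_imp_at_infinity[OF Ninf]])
    have ev: "\<forall>\<^sub>F n in sequentially. norm (stone p \<phi> (fst (G n)) (snd (G n)) - real (card (Y n)) / real (card (fst (G n))) ^ p)
              \<le> real (card (Pp p)) / real (card (fst (G n)))"
      using transfer[OF assms R ec] card_big[OF ec, of 1] fV
    proof -
      have e1: "\<forall>\<^sub>F n in sequentially. 1 \<le> card (fst (G n))" using card_big[OF ec] fV by blast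
      have e2: "\<forall>\<^sub>F n in sequentially. \<forall>f\<in>{1..p} \<rightarrow>\<^sub>E fst (G n). inj_on f {1..p} \<longrightarrow>
           (sat (fst (G n)) (snd (G n)) f \<phi> \<longleftrightarrow> pat p (snd (G n)) f \<in> S)"
        using transfer[OF assms R ec] unfolding S_def .
      show ?thesis using e1 e2
      proof (eventually_elim)
        case (elim n)
        then show ?case unfolding Y_def real_norm_def by (intro err_bound[OF fV]) auto
      qed
    qed
    have err: "(\<lambda>n. stone p \<phi> (fst (G n)) (snd (G n)) - real (card (Y n)) / real (card (fst (G n))) ^ p) \<longlonglongrightarrow> 0"
      by (rule Lim_null_comparison[OF ev g0])
    have "(\<lambda>n. (stone p \<phi> (fst (G n)) (snd (G n)) - real (card (Y n)) / real (card (fst (G n))) ^ p)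
              + real (card (Y n)) / real (card (fst (G n))) ^ p) \<longlonglongrightarrow> 0 + L (\<lambda>H. hom_density_W p H W)"
      using tendsto_add[OF err Lc[folded seq]] .
    then show "(\<lambda>n. stone p \<phi> (fst (G n)) (snd (G n)))
         \<longlonglongrightarrow> integral\<^sup>L (unit_cube p) (\<lambda>x. peval (\<lambda>i j. W (x i) (x j)) P)"
      unfolding int by simp
  qed
qed


end
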